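(* In the setting below, any correct sink member and any correct non-sink member are intertwined: for every correct $i\in V_{\mathit{sink}}$, every correct $i'\in\Pi\setminus V_{\mathit{sink}}$, every quorum $Q$ of $i$ and every quorum $Q'$ of $i'$, we have $|Q\cap Q'|>f$.
   Context: Processes and faults: $\Pi$ is a finite set of processes, $f\ge0$ a known integer; $W\subseteq\Pi$ is the set of correct processes and $F=\Pi\setminus W$ the Byzantine faulty processes, $|F|\le f$. Faulty processes may declare arbitrary slices. Slices and quorums: each process $i$ has a set $\mathcal{S}_i$ of slices (subsets of $\Pi$). $Q\subseteq\Pi$ is a quorum if every $i\in Q$ has some $S\in\mathcal{S}_i$ with $S\subseteq Q$; a quorum of $i$ is a quorum containing $i$. Two correct processes $i,j$ are intertwined if $|Q\cap Q'|>f$ for every quorum $Q$ of $i$ and every quorum $Q'$ of $j$. Knowledge graph: each process $i$ is given $\mathit{PD}_i\subseteq\Pi$; $G_{\mathit{di}}$ is the directed graph on $\Pi$ with edge $(i,j)$ iff $j\in\mathit{PD}_i$. A sink component is a strongly connected component of $G_{\mathit{di}}$ from which no path leads outside it. A directed graph is $k$-OSR if (1) its underlying undirected graph is connected; (2) its condensation into strongly connected components has exactly one sink $G_{\mathit{sink}}$; (3) $G_{\mathit{sink}}$ is $k$-strongly connected (every ordered pair of its nodes joined by $k$ node-disjoint directed paths); (4) from every node outside $G_{\mathit{sink}}$ to every node in it there are at least $k$ node-disjoint directed paths. Standing assumption: $G_{\mathit{di}}$ has a unique sink component with vertex set $V_{\mathit{sink}}$, which contains at least $2f+1$ correct processes,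 and the graph obtained from $G_{\mathit{di}}$ by deleting $F$ is $(f+1)$-OSR. Slice construction: let $m=\lceil (|V_{\mathit{sink}}|+f+1)/2\rceil$. Every correct $i\in V_{\mathit{sink}}$ has $\mathcal{S}_i=\{S\subseteq V_{\mathit{sink}}: |S|=m\}$. Every correct $i\notin V_{\mathit{sink}}$ is given a set $V_i\subseteq V_{\mathit{sink}}$ containing at least $f+1$ correct members of $V_{\mathit{sink}}$, and has $\mathcal{S}_i=\{S\subseteq V_i: |S|=f+1\}$. *)

theory Defs
  imports Complex_Main
begin

definition is_quorum :: "'p set \<Rightarrow> ('p \<Rightarrow> 'p set set) \<Rightarrow> 'p set \<Rightarrow> bool" where
  "is_quorum Procs S Q \<longleftrightarrow> Q \<subseteq> Procs \<and> (\<forall>i\<in>Q. \<exists>T\<in>S i. T \<subseteq> Q)"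

definition quorum_of :: "'p set \<Rightarrow> ('p \<Rightarrow> 'p set set) \<Rightarrow> 'p set \<Rightarrow> 'p \<Rightarrow> bool" where
  "quorum_of Procs S Q i \<longleftrightarrow> is_quorum Procs S Q \<and> i \<in> Q"

definition intertwined :: "'p set \<Rightarrow> ('p \<Rightarrow> 'p set set) \<Rightarrow> nat \<Rightarrow> 'p \<Rightarrow> 'p \<Rightarrow> bool" where
  "intertwined Procs S f i j \<longleftrightarrow>
     (\<forall>Q Q'. quorum_of Procs S Q i \<longrightarrow> quorum_of Procs S Q' j \<longrightarrow> card (Q \<inter> Q') > f)"

definition kgraph_edges :: "'p set \<Rightarrow> ('p \<Rightarrow> 'p set) \<Rightarrow> ('p \<times> 'p) set" where
  "kgraph_edges Procs PD = {(i, j). i \<in> Procs \<and> j \<in> Procs \<and> j \<in> PD i}"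

definition restrict_edges :: "('p \<times> 'p) set \<Rightarrow> 'p set \<Rightarrow> ('p \<times> 'p) set" where
  "restrict_edges E U = E \<inter> (U \<times> U)"

definition is_scc :: "'p set \<Rightarrow> ('p \<times> 'p) set \<Rightarrow> 'p set \<Rightarrow> bool" where
  "is_scc V E C \<longleftrightarrow> (\<exists>v\<in>V. C = {u\<in>V. (v, u) \<in> (restrict_edges E V)\<^sup>* \<and> (u, v) \<in> (restrict_edges E V)\<^sup>*})"

definition is_sink_component :: "'p set \<Rightarrow> ('p \<times> 'p) set \<Rightarrow> 'p set \<Rightarrow> bool" where
  "is_sink_component V E C \<longleftrightarrow> is_scc V E C \<and>
     (\<forall>u\<in>C. \<forall>w. (u, w) \<in> (restrict_edges E V)\<^sup>* \<longrightarrow> w \<in> C)"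

definition is_path :: "'p set \<Rightarrow> ('p \<times> 'p) set \<Rightarrow> 'p list \<Rightarrow> 'p \<Rightarrow> 'p \<Rightarrow> bool" where
  "is_path V E p u v \<longleftrightarrow> p \<noteq> [] \<and> hd p = u \<and> last p = v \<and> set p \<subseteq> V \<and> distinct p \<and>
     (\<forall>n. Suc n < length p \<longrightarrow> (p ! n, p ! Suc n) \<in> E)"

definition k_disjoint_paths :: "'p set \<Rightarrow> ('p \<times> 'p) set \<Rightarrow> nat \<Rightarrow> 'p \<Rightarrow> 'p \<Rightarrow> bool" where
  "k_disjoint_paths V E k u v \<longleftrightarrow>
     (\<exists>P. finite P \<and> card P = k \<and> (\<forall>p\<in>P. is_path V E p u v) \<and>
          (\<forall>p\<in>P. \<forall>q\<in>P. p \<noteq> q \<longrightarrow> set p \<inter> set q \<subseteq> {u, v}))"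

definition k_strongly_connected :: "'p set \<Rightarrow> ('p \<times> 'p) set \<Rightarrow> nat \<Rightarrow> bool" where
  "k_strongly_connected V E k \<longleftrightarrow>
     (\<forall>u\<in>V. \<forall>v\<in>V. u \<noteq> v \<longrightarrow> k_disjoint_paths V (restrict_edges E V) k u v)"

definition k_OSR :: "'p set \<Rightarrow> ('p \<times> 'p) set \<Rightarrow> nat \<Rightarrow> bool" where
  "k_OSR V E k \<longleftrightarrow>
     (\<forall>u\<in>V. \<forall>v\<in>V. (u, v) \<in> (restrict_edges E V \<union> (restrict_edges E V)\<inverse>)\<^sup>*) \<and>
     (\<exists>!C. is_sink_component V E C) \<and>
     (\<forall>C. is_sink_component V E C \<longrightarrow>
        k_strongly_connected C (restrict_edges E V) k \<and>
        (\<forall>u\<in>V - C. \<forall>v\<in>C. k_disjoint_paths V (restrict_edges E V) k u v))"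

end

theory Submission
  imports Defs
begin

lemma aux_ceil: "m = nat \<lceil>real (n::nat) / 2\<rceil> \<Longrightarrow> n \<le> 2 * m"
proof -
  assume m: "m = nat \<lceil>real (n::nat) / 2\<rceil>"
  have "real n / 2 \<le> of_int \<lceil>real n / 2\<rceil>" by (rule le_of_int_ceiling)
  hence "real n \<le> 2 * of_int \<lceil>real n / 2\<rceil>" by linarith
  hence "int n \<le> 2 * \<lceil>real n / 2\<rceil>" by linarith
  thus ?thesis using m by linarith
qed

theorem lemma4:
  fixes Procs W F :: "'p set" and f :: nat
    and PD :: "'p \<Rightarrow> 'p set" and S :: "'p \<Rightarrow> 'p set set"
    and Vsink :: "'p set" and Vi :: "'p \<Rightarrow> 'p set" and m :: nat
  assumes finProcs: "finite Procs"
    and W: "W \<subseteq> Procs" and F: "F = Procs - W" and cardF: "card F \<le> f"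
    and PD: "\<forall>i\<in>Procs. PD i \<subseteq> Procs"
    and sink: "is_sink_component Procs (kgraph_edges Procs PD) Vsink"
    and sink_unique: "\<forall>C. is_sink_component Procs (kgraph_edges Procs PD) C \<longrightarrow> C = Vsink"
    and sink_correct: "card (Vsink \<inter> W) \<ge> 2 * f + 1"
    and osr: "k_OSR (Procs - F) (restrict_edges (kgraph_edges Procs PD) (Procs - F)) (f + 1)"
    and m_def: "m = nat \<lceil>real (card Vsink + f + 1) / 2\<rceil>"
    and slices_sink: "\<forall>i\<in>W \<inter> Vsink. S i = {T. T \<subseteq> Vsink \<and> card T = m}"
    and Vi: "\<forall>i\<in>W - Vsink. Vi i \<subseteq> Vsink \<and> card (Vi i \<inter> W) \<ge> f + 1"
    and slices_nonsink: "\<forall>i\<in>W - Vsink. S i = {T. T \<subseteq> Vi i \<and> card T = f + 1}"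
  shows "\<forall>i\<in>W \<inter> Vsink. \<forall>i'\<in>W - Vsink. intertwined Procs S f i i'"
proof (intro ballI)
  fix i i' assume i: "i \<in> W \<inter> Vsink" and i': "i' \<in> W - Vsink"
  have VP: "Vsink \<subseteq> Procs" using sink unfolding is_sink_component_def is_scc_def by blast
  have finV: "finite Vsink" using VP finProcs finite_subset by blast
  have finF: "finite F" using F finProcs by simp
  have m2: "2 * m \<ge> card Vsink + f + 1" using aux_ceil[OF m_def] by simp
  show "intertwined Procs S f i i'"
    unfolding intertwined_def
  proof (intro allI impI)
    fix Q Q' assume q: "quorum_of Procs S Q i" and q': "quorum_of Procs S Q' i'"
    have finQ: "finite Q" using q finProcs unfolding quorum_of_def is_quorum_def
      using finite_subset by blast
    obtain T where T: "T \<in> S i" "T \<subseteq> Q" using q i unfolding quorum_of_def is_quorum_def by blast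
    have T2: "T \<subseteq> Vsink" "card T = m" using slices_sink i T(1) by simp_all
    obtain T' where T': "T' \<in> S i'" "T' \<subseteq> Q'" using q' i' unfolding quorum_of_def is_quorum_def by blast
    have T'2: "T' \<subseteq> Vi i'" "card T' = f + 1" using slices_nonsink i' T'(1) by simp_all
    have "\<not> T' \<subseteq> F"
    proof
      assume "T' \<subseteq> F"
      hence "card T' \<le> card F" using finF card_mono by blast
      thus False using T'2 cardF by simp
    qed
    then obtain j where j: "j \<in> T'" "j \<notin> F" by blast
    have jV: "j \<in> Vsink" using j T'2 Vi i' by blast
    have jW: "j \<in> W" using j jV VP F by blast
    have "j \<in> Q'" using j T' by blast
    then obtain U where U: "U \<in> S j" "U \<subseteq> Q'" using q' unfolding quorum_of_def is_quorum_def by blast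
    have jWV: "j \<in> W \<inter> Vsink" using jV jW by blast
    have U2: "U \<subseteq> Vsink" "card U = m" using slices_sink jWV U(1) by simp_all
    have finT: "finite T" "finite U" using T2 U2 finV finite_subset by blast+
    have "card (T \<union> U) \<le> card Vsink" using T2 U2 finV by (intro card_mono) simp_all
    moreover have "card (T \<union> U) + card (T \<inter> U) = card T + card U"
      using card_Un_Int[OF finT] by simp
    ultimately have "card (T \<inter> U) > f" using T2 U2 m2 by linarith
    moreover have "card (T \<inter> U) \<le> card (Q \<inter> Q')"
      proof (rule card_mono)
      show "finite (Q \<inter> Q')" using finQ by simp
      show "T \<inter> U \<subseteq> Q \<inter> Q'" using T(2) U(2) by blast
    qed
    ultimately show "card (Q \<inter> Q') > f" by linarith
  qed
qed

end
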